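(* For every $\beta\ge0$ there exists a function $f\in\mathcal{S}$ such that $C_\beta[f]\notin\mathcal{S}$.
   Context: $\mathbb{D}$ is the open unit disk; $\mathcal{A}$ the class of analytic $f$ on $\mathbb{D}$ with $f(0)=0$, $f'(0)=1$; $\mathcal{S}\subset\mathcal{A}$ the univalent functions. For $\beta\ge0$ and $f$ analytic on $\mathbb{D}$ with $f(0)=0$, $C_\beta[f](z)=\int_0^z \frac{f(w)}{w(1-w)^\beta}\,dw$ (principal branch of $(1-w)^\beta$). *)

theory Defs
  imports "HOL-Complex_Analysis.Complex_Analysis"
begin

definition class_S :: "(complex \<Rightarrow> complex) set" where
  "class_S = {f. f holomorphic_on ball 0 1 \<and> f 0 = 0 \<and> deriv f 0 = 1 \<and> inj_on f (ball 0 1)}"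

text \<open>The integrand f(w) / (w (1-w)^beta), with its removable singularity at 0
  filled in by the value f'(0). Principal branch: (1-w) powr beta = exp(beta * Ln(1-w)).\<close>
definition cesaro_integrand :: "real \<Rightarrow> (complex \<Rightarrow> complex) \<Rightarrow> complex \<Rightarrow> complex" where
  "cesaro_integrand \<beta> f w =
     (if w = 0 then deriv f 0 else f w / (w * (1 - w) powr (of_real \<beta>)))"

definition cesaro_op :: "real \<Rightarrow> (complex \<Rightarrow> complex) \<Rightarrow> complex \<Rightarrow> complex" where
  "cesaro_op \<beta> f z = contour_integral (linepath 0 z) (cesaro_integrand \<beta> f)"

end

theory Submission
  imports Defs
begin

definition mu :: complex where "mu = Complex (-1) 1"
definition Mb :: "complex \<Rightarrow> complex" where "Mb z = (1+z)/(1-z)"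
definition ff :: "complex \<Rightarrow> complex" where "ff z = (exp (mu * Ln (Mb z)) - 1) / (2*mu)"

lemma mu_nz [simp]: "mu \<noteq> 0" by (simp add: mu_def complex_eq_iff)

lemma Re_Mb_pos:
  assumes "norm z < 1" shows "0 < Re (Mb z)"
proof -
  have z1: "z \<noteq> 1" using assms by auto
  have "(cmod z)^2 < 1^2" using assms by (intro power_strict_mono) auto
  then have "(Re z)^2 + (Im z)^2 < 1" by (simp add: cmod_power2)
  moreover have "(cmod (1-z))^2 > 0" using z1 by simp
  then have "(Re (1-z))^2 + (Im (1-z))^2 > 0" by (simp only: cmod_power2)
  ultimately show ?thesis unfolding Mb_def Re_divide
    by (auto simp: algebra_simps power2_eq_square intro!: divide_pos_pos)
qed

lemma Mb_nonpos: "norm z < 1 \<Longrightarrow> Mb z \<notin> \<real>\<^sub>\<le>\<^sub>0"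
  by (metis Re_Mb_pos complex_nonpos_Reals_iff not_less)

lemma Ln_Mb_holo: "(\<lambda>z. Ln (Mb z)) holomorphic_on ball 0 1"
proof (rule holomorphic_on_Ln')
  show "Mb holomorphic_on ball 0 1" unfolding Mb_def by (auto intro!: holomorphic_intros)
qed (use Mb_nonpos in force)

lemma ff_holo: "ff holomorphic_on ball 0 1"
  unfolding ff_def
  by (intro holomorphic_on_divide holomorphic_on_diff holomorphic_on_const holomorphic_on_mult Ln_Mb_holo holomorphic_on_exp') auto

lemma ff_deriv: "(ff has_field_derivative 1) (at 0)"
proof -
  have DM: "(Mb has_field_derivative 2) (at 0)"
    unfolding Mb_def by (auto intro!: derivative_eq_intros)
  have "Mb 0 = 1" by (simp add: Mb_def)
  have DL: "((\<lambda>z. Ln (Mb z)) has_field_derivative inverse (Mb 0) * 2) (at 0)"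
    by (rule DERIV_chain2[OF has_field_derivative_Ln DM]) (simp add: \<open>Mb 0 = 1\<close>)
  have DE: "((\<lambda>z. exp (mu * Ln (Mb z))) has_field_derivative exp (mu * Ln (Mb 0)) * (mu * (inverse (Mb 0) * 2))) (at 0)"
    by (rule DERIV_chain2[OF DERIV_exp]) (rule DERIV_cmult[OF DL])
  have "((\<lambda>z. (exp (mu * Ln (Mb z)) - 1) / (2*mu)) has_field_derivative (exp (mu * Ln (Mb 0)) * (mu * (inverse (Mb 0) * 2)) - 0) / (2*mu)) (at 0)"
    by (intro DERIV_cdivide DERIV_diff DE DERIV_const)
  then show ?thesis unfolding ff_def using \<open>Mb 0 = 1\<close> by simp
qed

lemma ff0: "ff 0 = 0" by (simp add: ff_def Mb_def)




lemma Mb_inj: assumes "Mb z1 = Mb z2" "norm z1 < 1" "norm z2 < 1" shows "z1 = z2"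
proof -
  have "1 - z1 \<noteq> 0" "1 - z2 \<noteq> 0" using assms by auto
  then have "(1+z1)*(1-z2) = (1+z2)*(1-z1)" using assms(1) unfolding Mb_def
    by (simp add: divide_eq_eq eq_divide_eq field_simps)
  then show ?thesis by (simp add: algebra_simps)
qed

lemma ff_inj: "inj_on ff (ball 0 1)"
proof (rule inj_onI)
  fix z1 z2 assume z1: "z1 \<in> ball 0 1" and z2: "z2 \<in> ball 0 1" and eq: "ff z1 = ff z2"
  define a where "a = Ln (Mb z1)"
  define b where "b = Ln (Mb z2)"
  have n1: "cmod z1 < 1" "cmod z2 < 1" using z1 z2 by auto
  have Mnz: "Mb z1 \<noteq> 0" "Mb z2 \<noteq> 0" using Re_Mb_pos[OF n1(1)] Re_Mb_pos[OF n1(2)] by auto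
  have ia: "\<bar>Im a\<bar> < pi/2" unfolding a_def by (rule Re_Ln_pos_lt_imp[OF Re_Mb_pos[OF n1(1)]])
  have ib: "\<bar>Im b\<bar> < pi/2" unfolding b_def by (rule Re_Ln_pos_lt_imp[OF Re_Mb_pos[OF n1(2)]])
  have "exp (mu * a) = exp (mu * b)" using eq unfolding ff_def a_def b_def by simp
  then obtain n::int where n: "mu * a = mu * b + of_int (2*n) * pi * \<i>" by (auto simp: exp_eq)
  have r: "- Re a - Im a = - Re b - Im b" using arg_cong[where f=Re, OF n] by (simp add: mu_def)
  have i: "Re a - Im a = Re b - Im b + 2 * n * pi" using arg_cong[where f=Im, OF n] by (simp add: mu_def)
  have "Im b - Im a = n * pi" using r i by linarith
  then have "\<bar>n * pi\<bar> < pi" using ia ib by linarith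
  then have "\<bar>real_of_int n\<bar> < 1" by (simp add: abs_mult)
  then have "n = 0" by linarith
  then have "a = b" using r i by (simp add: complex_eq_iff)
  then have "Mb z1 = Mb z2" unfolding a_def b_def by (metis Mnz exp_Ln)
  then show "z1 = z2" using Mb_inj n1 by blast
qed

lemma ff_S: "ff \<in> class_S"
  unfolding class_S_def using ff_holo ff0 ff_inj DERIV_imp_deriv[OF ff_deriv] by auto




definition Ew :: "real \<Rightarrow> complex \<Rightarrow> complex" where "Ew b w = exp (of_real b * Ln (1 - w))"

lemma one_minus_nonpos: "norm (w::complex) < 1 \<Longrightarrow> 1 - w \<notin> \<real>\<^sub>\<le>\<^sub>0"
proof -
  assume "norm w < 1"
  then have "Re w < 1" using complex_Re_le_cmod[of w] by linarith
  then show ?thesis by (auto simp: complex_nonpos_Reals_iff)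
qed

lemma powr_Ew: "norm w < 1 \<Longrightarrow> (1 - w) powr (of_real b) = Ew b w"
  unfolding Ew_def powr_def by auto

lemma Ew_holo: "Ew b holomorphic_on ball 0 1"
proof -
  have "(\<lambda>w. Ln (1 - w)) holomorphic_on ball 0 1"
    by (rule holomorphic_on_Ln') (auto intro!: holomorphic_intros one_minus_nonpos)
  then show ?thesis unfolding Ew_def
    by (intro holomorphic_on_exp' holomorphic_on_mult holomorphic_on_const)
qed

lemma Ew_nz [simp]: "Ew b w \<noteq> 0" by (simp add: Ew_def)
lemma Ew_0 [simp]: "Ew b 0 = 1" by (simp add: Ew_def)

lemma h_eq: "norm w < 1 \<Longrightarrow> w \<noteq> 0 \<Longrightarrow> cesaro_integrand b ff w = ff w / (w * Ew b w)"
  unfolding cesaro_integrand_def using powr_Ew by simp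

lemma h_holo: "cesaro_integrand b ff holomorphic_on (ball 0 1 - {0})"
proof (rule holomorphic_transform[of "\<lambda>w. ff w / (w * Ew b w)"])
  show "(\<lambda>w. ff w / (w * Ew b w)) holomorphic_on ball 0 1 - {0}"
  proof -
    have "ff holomorphic_on ball 0 1 - {0}" "Ew b holomorphic_on ball 0 1 - {0}"
      using holomorphic_on_subset[OF ff_holo] holomorphic_on_subset[OF Ew_holo[of b]] by auto
    then show ?thesis
      by (intro holomorphic_on_divide holomorphic_on_mult holomorphic_on_id) auto
  qed
qed (auto simp: h_eq)

lemma h_cont0: "isCont (cesaro_integrand b ff) 0"
proof -
  have h0: "cesaro_integrand b ff 0 = 1"
    unfolding cesaro_integrand_def using DERIV_imp_deriv[OF ff_deriv] by simp
  have q: "((\<lambda>w. (ff w - ff 0) / (w - 0)) \<longlongrightarrow> 1) (at 0)"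
    using ff_deriv by (simp add: has_field_derivative_iff)
  have "isCont (Ew b) 0"
    using Ew_holo by (meson centre_in_ball holomorphic_on_imp_continuous_on continuous_on_eq_continuous_at open_ball zero_less_one)
  then have e: "((Ew b) \<longlongrightarrow> 1) (at 0)" by (metis Ew_0 isCont_def)
  have "((\<lambda>w. ((ff w - ff 0) / (w - 0)) / Ew b w) \<longlongrightarrow> 1 / 1) (at 0)"
    by (rule tendsto_divide[OF q e]) simp
  then have "((\<lambda>w. ((ff w - ff 0) / (w - 0)) / Ew b w) \<longlongrightarrow> 1) (at 0)" by simp
  then have "(cesaro_integrand b ff \<longlongrightarrow> 1) (at 0)"
  proof (rule Lim_transform_within_open[where s="ball 0 1"])
    fix x :: complex assume "x \<in> ball 0 1" "x \<noteq> 0"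
    then show "(ff x - ff 0) / (x - 0) / Ew b x = cesaro_integrand b ff x"
      using h_eq[of x b] ff0 by simp
  qed auto
  then show ?thesis using h0 by (simp add: isCont_def)
qed

lemma h_cont: "continuous_on (ball 0 1) (cesaro_integrand b ff)"
proof -
  have c: "continuous_on (ball 0 1 - {0}) (cesaro_integrand b ff)"
    using h_holo holomorphic_on_imp_continuous_on by blast
  have "isCont (cesaro_integrand b ff) x" if "x \<in> ball 0 1" for x
  proof (cases "x = 0")
    case True then show ?thesis using h_cont0 by simp
  next
    case False
    have "open (ball (0::complex) 1 - {0})" by auto
    then show ?thesis using c False that continuous_on_eq_continuous_at by blast
  qed
  then show ?thesis by (simp add: continuous_on_eq_continuous_at)
qed

lemma primitive_exists:
  obtains G where "\<And>x. x \<in> ball 0 1 \<Longrightarrow> (G has_field_derivative cesaro_integrand b ff x) (at x within ball 0 1)"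
proof (rule holomorphic_convex_primitive[of "ball 0 1" "{0}" "cesaro_integrand b ff"])
  fix x assume "x \<in> interior (ball (0::complex) 1) - {0}"
  then show "cesaro_integrand b ff field_differentiable at x"
    using h_holo by (metis holomorphic_on_imp_differentiable_at open_ball open_delete interior_open)
qed (use h_cont in auto)

lemma cesaro_G:
  assumes G: "\<And>x. x \<in> ball 0 1 \<Longrightarrow> (G has_field_derivative cesaro_integrand b ff x) (at x within ball 0 1)"
    and z: "z \<in> ball 0 1"
  shows "cesaro_op b ff z = G z - G 0"
proof -
  have "closed_segment 0 z \<subseteq> ball 0 1"
    using z by (intro closed_segment_subset) auto
  then have "(cesaro_integrand b ff has_contour_integral (G z - G 0)) (linepath 0 z)"
    using contour_integral_primitive[OF G, of "linepath 0 z"] by auto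
  then show ?thesis unfolding cesaro_op_def by (rule contour_integral_unique)
qed




definition Wm :: "complex \<Rightarrow> complex" where "Wm s = (exp s - 1) / (exp s + 1)"
definition Oset :: "complex set" where "Oset = {s. Re s < 0 \<and> \<bar>Im s\<bar> < pi/2}"
definition Dd :: "real \<Rightarrow> complex \<Rightarrow> complex" where "Dd b s = exp (of_real b * Ln (1 + exp s))"

lemma Oset_open: "open Oset"
proof -
  have "Oset = {s. Re s < 0} \<inter> ({s. Im s < pi/2} \<inter> {s. - (pi/2) < Im s})"
    unfolding Oset_def by auto
  moreover have "open ({s. Re s < 0} \<inter> ({s. Im s < pi/2} \<inter> {s. - (pi/2) < Im s}))"
    by (intro open_Int open_halfspace_Re_lt open_halfspace_Im_lt open_halfspace_Im_gt)
  ultimately show ?thesis by simp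
qed

lemma Re_exp_pos: assumes "s \<in> Oset" shows "0 < Re (exp s)"
proof -
  have "- (pi/2) < Im s" "Im s < pi/2" using assms unfolding Oset_def by auto
  then have "0 < cos (Im s)" by (rule cos_gt_zero_pi)
  then show ?thesis by (simp add: Re_exp)
qed

lemma exp_p1_nz: assumes "s \<in> Oset" shows "exp s + 1 \<noteq> 0"
proof
  assume "exp s + 1 = 0"
  then have "Re (exp s + 1) = 0" by simp
  then have "Re (exp s) = -1" by simp
  then show False using Re_exp_pos[OF assms] by simp
qed

lemma norm_exp_Oset: assumes "s \<in> Oset" shows "norm (exp s) < 1"
proof -
  have "Re s < 0" using assms unfolding Oset_def by auto
  then show ?thesis by (simp add: norm_exp_eq_Re)
qed

lemma Wm_ball: assumes "s \<in> Oset" shows "norm (Wm s) < 1"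
proof -
  define a where "a = exp s"
  have "0 < Re a" using Re_exp_pos[OF assms] a_def by simp
  then have "(Re a - 1)^2 + (Im a)^2 < (Re a + 1)^2 + (Im a)^2"
    by (simp add: power2_eq_square algebra_simps)
  then have "(cmod (a - 1))^2 < (cmod (a + 1))^2" by (simp add: cmod_power2)
  then have "cmod (a - 1) < cmod (a + 1)" by (meson norm_ge_zero power_less_imp_less_base)
  moreover have "a + 1 \<noteq> 0" using exp_p1_nz[OF assms] a_def by simp
  ultimately show ?thesis unfolding Wm_def a_def[symmetric] by (simp add: norm_divide divide_less_eq)
qed

lemma Wm_nz: assumes "s \<in> Oset" shows "Wm s \<noteq> 0"
proof -
  have "norm (exp s) < 1" by (rule norm_exp_Oset[OF assms])
  then have "exp s \<noteq> 1" by (metis norm_one less_irrefl)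
  then show ?thesis unfolding Wm_def using exp_p1_nz[OF assms] by simp
qed

lemma Mb_Wm: assumes "s \<in> Oset" shows "Mb (Wm s) = exp s"
proof -
  have n: "exp s + 1 \<noteq> 0" using exp_p1_nz[OF assms] .
  have a: "1 + Wm s = 2 * exp s / (exp s + 1)" unfolding Wm_def using n by (simp add: field_simps)
  have b: "1 - Wm s = 2 / (exp s + 1)" unfolding Wm_def using n by (simp add: field_simps)
  have nz2: "2 / (exp s + 1) \<noteq> 0" using n by simp
  have "2 * exp s / (exp s + 1) = exp s * (2 / (exp s + 1))" by simp
  then show ?thesis unfolding Mb_def a b using nz2 by simp
qed

lemma one_minus_Wm: assumes "s \<in> Oset" shows "1 - Wm s = 2 / (1 + exp s)"
proof -
  have n: "exp s + 1 \<noteq> 0" using exp_p1_nz[OF assms] .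
  then show ?thesis unfolding Wm_def by (simp add: field_simps)
qed

lemma Wm_deriv: assumes "s \<in> Oset" shows "(Wm has_field_derivative (2 * exp s / (exp s + 1)^2)) (at s)"
proof -
  have n: "exp s + 1 \<noteq> 0" using exp_p1_nz[OF assms] .
  have d1: "((\<lambda>s. exp s - 1) has_field_derivative exp s - 0) (at s)"
    by (intro DERIV_diff DERIV_exp DERIV_const)
  have d2: "((\<lambda>s. exp s + 1) has_field_derivative exp s + 0) (at s)"
    by (intro DERIV_add DERIV_exp DERIV_const)
  have "((\<lambda>s. (exp s - 1) / (exp s + 1)) has_field_derivative
          ((exp s - 0) * (exp s + 1) - (exp s - 1) * (exp s + 0)) / ((exp s + 1) * (exp s + 1))) (at s)"
    by (rule DERIV_divide[OF d1 d2 n])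
  moreover have "((exp s - 0) * (exp s + 1) - (exp s - 1) * (exp s + 0)) / ((exp s + 1) * (exp s + 1))
      = 2 * exp s / (exp s + 1)^2"
    by (simp add: algebra_simps power2_eq_square)
  ultimately show ?thesis unfolding Wm_def by simp
qed

lemma Ln_two_div: assumes "s \<in> Oset"
  shows "Ln (2 / (1 + exp s)) = of_real (ln 2) - Ln (1 + exp s)"
proof -
  have p: "0 < Re (1 + exp s)" using Re_exp_pos[OF assms] by simp
  have nz: "1 + exp s \<noteq> 0"
  proof
    assume "1 + exp s = 0"
    then have "Re (1 + exp s) = 0" by simp
    with p show False by simp
  qed
  have im: "\<bar>Im (Ln (1 + exp s))\<bar> < pi/2" by (rule Re_Ln_pos_lt_imp[OF p])
  have "exp (of_real (ln 2) - Ln (1 + exp s)) = 2 / (1 + exp s)"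
    using nz by (simp add: exp_diff exp_of_real)
  then have "Ln (2 / (1 + exp s)) = Ln (exp (of_real (ln 2) - Ln (1 + exp s)))" by simp
  also have "\<dots> = of_real (ln 2) - Ln (1 + exp s)"
    using im by (intro Ln_exp) auto
  finally show ?thesis .
qed

definition c2 :: "real \<Rightarrow> real" where "c2 b = exp (- b * ln 2)"

lemma phi_formula:
  assumes s: "s \<in> Oset"
  shows "cesaro_integrand b ff (Wm s) * (2 * exp s / (exp s + 1)^2)
       = of_real (c2 b) * ((exp (\<i> * s) - exp s) * Dd b s / (mu * ((exp s)^2 - 1)))"
proof -
  define u where "u = exp s"
  have n: "u + 1 \<noteq> 0" using exp_p1_nz[OF s] u_def by simp
  have "norm u < 1" using norm_exp_Oset[OF s] u_def by simp
  then have u1: "u \<noteq> 1" by (metis norm_one less_irrefl)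
  have u0: "u \<noteq> 0" using u_def by simp
  have ims: "- pi < Im s" "Im s \<le> pi" using s unfolding Oset_def by auto
  have ff: "ff (Wm s) = (exp (mu * s) - 1) / (2 * mu)"
    unfolding ff_def Mb_Wm[OF s] using Ln_exp[OF ims] by simp
  have Ew: "Ew b (Wm s) = exp (of_real b * of_real (ln 2)) / Dd b s"
    unfolding Ew_def one_minus_Wm[OF s] Ln_two_div[OF s] Dd_def
    by (simp add: right_diff_distrib exp_diff)
  have e2: "exp (of_real b * of_real (ln 2)) * of_real (c2 b) = (1::complex)"
    unfolding c2_def by (simp add: exp_of_real[symmetric] exp_add[symmetric] del: exp_of_real)
  have ms: "mu * s + s = \<i> * s" by (simp add: mu_def complex_eq_iff)
  have c2nz: "complex_of_real (c2 b) \<noteq> 0" unfolding c2_def by simp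
  have cK: "exp (of_real b * of_real (ln 2)) = 1 / complex_of_real (c2 b)"
    using e2 c2nz by (simp add: field_simps)
  have emu: "exp (mu * s) * u = exp (\<i> * s)"
    unfolding u_def by (simp add: exp_add[symmetric] ms)
  have W: "Wm s = (u - 1) / (u + 1)" unfolding Wm_def u_def ..
  have hW: "cesaro_integrand b ff (Wm s) = ff (Wm s) / (Wm s * Ew b (Wm s))"
    using h_eq[OF Wm_ball[OF s] Wm_nz[OF s]] .
  have "cesaro_integrand b ff (Wm s) * (2 * exp s / (exp s + 1)^2)
     = (exp (mu * s) - 1) / (2 * mu) / ((u - 1) / (u + 1) * ((1 / of_real (c2 b)) / Dd b s)) * (2 * u / (u + 1)^2)"
    using hW ff Ew W u_def cK by simp
  also have "\<dots> = of_real (c2 b) * ((exp (mu * s) * u - u) * Dd b s / (mu * (u^2 - 1)))"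
  proof -
    have uu: "u * u - 1 \<noteq> 0"
    proof
      assume "u * u - 1 = 0"
      then have "(u - 1) * (u + 1) = 0" by (simp add: algebra_simps)
      then show False using n u1 by (simp add: add.commute)
    qed
    have d1: "mu * (u * u) - mu \<noteq> 0" using uu by (metis mu_nz mult_eq_0_iff right_diff_distrib mult.right_neutral)
    have d2: "mu * (u * (u * 2)) + mu * (u * (u * (u * 2))) - (mu * 2 + mu * (u * 2)) \<noteq> 0"
    proof -
      have "mu * (u * (u * 2)) + mu * (u * (u * (u * 2))) - (mu * 2 + mu * (u * 2)) = 2 * (mu * (u * u) - mu) * (1 + u)"
        by (simp add: algebra_simps)
      then show ?thesis using d1 n by (simp add: add.commute)
    qed
    show ?thesis using n u1 u0 c2nz d1 d2 by (simp add: field_simps power2_eq_square)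
  qed
  also have "\<dots> = of_real (c2 b) * ((exp (\<i> * s) - u) * Dd b s / (mu * (u^2 - 1)))"
    by (simp only: emu)
  finally show ?thesis unfolding u_def .
qed




lemma norm_Ln_le: assumes "cmod u \<le> 1/2" shows "cmod (Ln (1 + u)) \<le> 2 * cmod u"
proof -
  have a: "cmod (Ln (1 + u) - u) \<le> cmod u ^ 2 / (1 - cmod u)"
    by (rule Ln_approx_linear) (use assms in auto)
  have "cmod u ^ 2 \<le> cmod u * (1 - cmod u)" using assms by (simp add: power2_eq_square mult_left_mono)
  then have "cmod u ^ 2 / (1 - cmod u) \<le> cmod u" using assms by (simp add: divide_le_eq)
  then have "cmod (Ln (1 + u) - u) \<le> cmod u" using a by linarith
  moreover have "cmod (Ln (1 + u)) \<le> cmod (Ln (1 + u) - u) + cmod u"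
    using norm_triangle_ineq[of "Ln (1 + u) - u" u] by simp
  ultimately show ?thesis by linarith
qed

lemma Dd_bound:
  assumes "cmod (exp s) \<le> d" "d \<le> 1/2" "0 \<le> b" "2 * b * d \<le> 1/2"
  shows "cmod (Dd b s - 1) \<le> 3 * b * d"
proof -
  define z where "z = of_real b * Ln (1 + exp s)"
  have "cmod (Ln (1 + exp s)) \<le> 2 * cmod (exp s)" by (rule norm_Ln_le) (use assms in auto)
  also have "\<dots> \<le> 2 * d" using assms by simp
  finally have L: "cmod (Ln (1 + exp s)) \<le> 2 * d" .
  have "cmod z = b * cmod (Ln (1 + exp s))" unfolding z_def using assms by (simp add: norm_mult)
  also have "\<dots> \<le> b * (2 * d)" using L assms by (simp add: mult_left_mono)
  finally have zb: "cmod z \<le> 2 * b * d" by simp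
  then have "cmod z \<le> 1/2" using assms by linarith
  then have "cmod (exp z - 1) \<le> 3/2 * cmod z" by (rule norm_exp_bounds(2))
  also have "\<dots> \<le> 3 * b * d" using zb by simp
  finally show ?thesis unfolding Dd_def z_def .
qed

lemma key_bound:
  fixes u v D m :: complex
  assumes u: "cmod u \<le> d" and d: "d \<le> 1/2" and v: "cmod v \<le> 2" and D: "cmod (D - 1) \<le> e"
    and e: "e \<le> 1" and m: "1 \<le> cmod m"
  shows "cmod ((v - u) * D / (m * (u^2 - 1)) + v / m) \<le> 2 * (2*e + 2*d + 2*d^2)"
proof -
  have d0: "0 \<le> d" using u norm_ge_zero order_trans by blast
  have u2: "cmod (u^2) \<le> d^2" using u by (simp add: norm_power power_mono)
  have "1 \<le> cmod (u^2 - 1) + cmod (u^2)"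
    using norm_triangle_sub[of 1 "u^2"] by (simp add: norm_minus_commute)
  moreover have "d^2 \<le> 1/4"
  proof -
    have "d * d \<le> (1/2) * (1/2)" by (rule mult_mono) (use d d0 in auto)
    then show ?thesis by (simp add: power2_eq_square)
  qed
  ultimately have den: "1/2 \<le> cmod (u^2 - 1)" using u2 by linarith
  have m0: "m \<noteq> 0" using m by auto
  have un: "u^2 - 1 \<noteq> 0" using den by auto
  have eq: "(v - u) * D / (m * (u^2 - 1)) + v / m = (v * (D - 1) - u * D + v * u^2) / (m * (u^2 - 1))"
    using m0 un by (simp add: field_simps)
  have Dn: "cmod D \<le> 2"
    using norm_triangle_sub[of D 1] D e by simp
  have n1: "cmod (v * (D - 1)) \<le> 2 * e"
    by (simp add: norm_mult) (rule mult_mono[OF v D]; simp)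
  have n2: "cmod (u * D) \<le> d * 2"
    by (simp add: norm_mult) (rule mult_mono[OF u Dn]; use d0 in simp)
  have n3: "cmod (v * u^2) \<le> 2 * d^2"
    by (simp only: norm_mult) (rule mult_mono[OF v u2]; simp)
  have num: "cmod (v * (D - 1) - u * D + v * u^2) \<le> 2*e + 2*d + 2*d^2"
    using norm_triangle_ineq4[of "v * (D - 1)" "u * D"] norm_triangle_ineq[of "v * (D - 1) - u * D" "v * u^2"] n1 n2 n3
    by linarith
  have nn: "0 \<le> 2*e + 2*d + 2*d^2" by (rule order_trans[OF norm_ge_zero num])
  have "cmod (m * (u^2 - 1)) \<ge> 1 * (1/2)"
    by (simp only: norm_mult) (rule mult_mono[OF m den]; simp)
  then have "cmod ((v * (D - 1) - u * D + v * u^2) / (m * (u^2 - 1))) \<le> (2*e + 2*d + 2*d^2) / (1/2)"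
    unfolding norm_divide using num nn by (intro frac_le) auto
  then show ?thesis unfolding eq by simp
qed

lemma Wm_inj: assumes "a \<in> Oset" "b \<in> Oset" "Wm a = Wm b" shows "exp a = exp b"
proof -
  have na: "exp a + 1 \<noteq> 0" and nb: "exp b + 1 \<noteq> 0" using exp_p1_nz assms by auto
  have "(exp a - 1) * (exp b + 1) = (exp b - 1) * (exp a + 1)"
    using assms(3) na nb unfolding Wm_def by (simp add: field_simps)
  then have "2 * exp a = 2 * exp b" by (simp add: algebra_simps)
  then show ?thesis by simp
qed

lemma cmod_mu: "cmod mu = sqrt 2" by (simp add: mu_def cmod_def)

lemma sqrt2_bounds: "1 \<le> sqrt 2" "sqrt 2 \<le> 3/2"
proof -
  show "1 \<le> sqrt (2::real)" by simp
  have "sqrt (2::real) \<le> sqrt ((3/2)^2)" by (intro real_sqrt_le_mono) (simp add: power2_eq_square)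
  then show "sqrt (2::real) \<le> 3/2" by simp
qed




theorem theorem2p18:
  fixes \<beta> :: real
  assumes "\<beta> \<ge> 0"
  shows "\<exists>f \<in> class_S. cesaro_op \<beta> f \<notin> class_S"
proof -
  obtain G where G: "\<And>x. x \<in> ball 0 1 \<Longrightarrow> (G has_field_derivative cesaro_integrand \<beta> ff x) (at x within ball 0 1)"
    using primitive_exists by blast
  have Gat: "(G has_field_derivative cesaro_integrand \<beta> ff x) (at x)" if "x \<in> ball 0 1" for x
    using G[OF that] at_within_open[OF that open_ball] by simp
  define \<phi> where "\<phi> = (\<lambda>s. of_real (c2 \<beta>) * ((exp (\<i> * s) - exp s) * Dd \<beta> s / (mu * ((exp s)^2 - 1))))"
  define \<Psi> where "\<Psi> = (\<lambda>s. G (Wm s))"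
  have d\<Psi>: "(\<Psi> has_field_derivative \<phi> s) (at s)" if s: "s \<in> Oset" for s
  proof -
    have "Wm s \<in> ball 0 1" using Wm_ball[OF s] by simp
    from DERIV_chain2[OF Gat[OF this] Wm_deriv[OF s]]
    show ?thesis unfolding \<Psi>_def \<phi>_def phi_formula[OF s] .
  qed
  define P0 where "P0 = (\<lambda>s. of_real (c2 \<beta>) * \<i> * exp (\<i> * s) / mu)"
  define \<phi>0 where "\<phi>0 = (\<lambda>s. - of_real (c2 \<beta>) * exp (\<i> * s) / mu)"
  have dP0: "(P0 has_field_derivative \<phi>0 s) (at s)" for s
  proof -
    have "((\<lambda>s. exp (\<i> * s)) has_field_derivative exp (\<i> * s) * (\<i> * 1)) (at s)"
      by (rule DERIV_chain2[OF DERIV_exp DERIV_cmult[OF DERIV_ident]])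
    then have "((\<lambda>s. of_real (c2 \<beta>) * \<i> * exp (\<i> * s) / mu) has_field_derivative
        of_real (c2 \<beta>) * \<i> * (exp (\<i> * s) * (\<i> * 1)) / mu) (at s)"
      by (intro DERIV_cdivide DERIV_cmult)
    moreover have "of_real (c2 \<beta>) * \<i> * (exp (\<i> * s) * (\<i> * 1)) / mu = \<phi>0 s"
      unfolding \<phi>0_def by (simp add: field_simps)
    ultimately show ?thesis unfolding P0_def by simp
  qed
  define \<delta> where "\<delta> = 1 / (10000 * (\<beta> + 1))"
  have \<delta>pos: "0 < \<delta>" unfolding \<delta>_def using assms by simp
  have \<delta>le: "\<delta> \<le> 1/10000" unfolding \<delta>_def using assms by (simp add: field_simps)
  have \<beta>\<delta>: "\<beta> * \<delta> \<le> 1/10000" unfolding \<delta>_def using assms by (simp add: field_simps)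
  define ld where "ld = ln \<delta>"
  have ld_neg: "ld < 0" unfolding ld_def using \<delta>pos \<delta>le by simp
  have exp_ld: "exp ld = \<delta>" unfolding ld_def using \<delta>pos by simp
  define c where "c = ld - 1/2"
  define \<sigma>0 where "\<sigma>0 = c - 2*pi"
  define R where "R = {s. \<sigma>0 \<le> Re s} \<inter> {s. Re s \<le> ld} \<inter> {s. -(1/2) \<le> Im s} \<inter> {s. Im s \<le> 1/2}"
  have convR: "convex R" unfolding R_def
    by (intro convex_Int convex_halfspace_Re_ge convex_halfspace_Re_le convex_halfspace_Im_ge convex_halfspace_Im_le)
  have RO: "R \<subseteq> Oset" unfolding R_def Oset_def using ld_neg pi_gt3 by auto
  have c2pos: "0 < c2 \<beta>" by (simp add: c2_def)
  have errb: "cmod (\<phi> s - \<phi>0 s) \<le> c2 \<beta> / 500" if s: "s \<in> R" for s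
  proof -
    have "Re s \<le> ld" using s unfolding R_def by auto
    then have "exp (Re s) \<le> exp ld" by simp
    then have u: "cmod (exp s) \<le> \<delta>" using exp_ld by (simp add: norm_exp_eq_Re)
    have "- Im s \<le> 1/2" using s unfolding R_def by auto
    then have "exp (- Im s) \<le> exp (1/2)" by simp
    moreover have "cmod (exp (\<i> * s)) = exp (- Im s)" by (simp add: norm_exp_eq_Re)
    ultimately have v: "cmod (exp (\<i> * s)) \<le> 2" using exp_half_le2 by linarith
    have D: "cmod (Dd \<beta> s - 1) \<le> 3 * \<beta> * \<delta>"
      by (rule Dd_bound[OF u]) (use \<delta>le \<beta>\<delta> assms in auto)
    have m: "1 \<le> cmod mu" using cmod_mu sqrt2_bounds by simp
    have e3: "3 * \<beta> * \<delta> \<le> 1" using \<beta>\<delta> by simp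
    have kb: "cmod ((exp (\<i> * s) - exp s) * Dd \<beta> s / (mu * ((exp s)^2 - 1)) + exp (\<i> * s) / mu)
        \<le> 2 * (2*(3*\<beta>*\<delta>) + 2*\<delta> + 2*\<delta>^2)"
      by (rule key_bound[OF u _ v D e3 m]) (use \<delta>le in auto)
    have eq: "\<phi> s - \<phi>0 s = of_real (c2 \<beta>) * ((exp (\<i> * s) - exp s) * Dd \<beta> s / (mu * ((exp s)^2 - 1)) + exp (\<i> * s) / mu)"
      unfolding \<phi>_def \<phi>0_def by (simp add: distrib_left)
    have "\<delta>^2 \<le> 1/10000 * 1" unfolding power2_eq_square
      by (rule mult_mono) (use \<delta>le \<delta>pos in auto)
    then have arith: "2 * (2*(3*\<beta>*\<delta>) + 2*\<delta> + 2*\<delta>^2) \<le> 1/500"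
      using \<beta>\<delta> \<delta>le by (simp add: mult.assoc)
    have "cmod (\<phi> s - \<phi>0 s) = c2 \<beta> * cmod ((exp (\<i> * s) - exp s) * Dd \<beta> s / (mu * ((exp s)^2 - 1)) + exp (\<i> * s) / mu)"
      unfolding eq norm_mult using c2pos by simp
    also have "\<dots> \<le> c2 \<beta> * (1/500)"
      using kb arith c2pos by (intro mult_left_mono) auto
    finally show ?thesis by simp
  qed
  define \<Theta> where "\<Theta> = (\<lambda>s. \<Psi> s - P0 s)"
  have d\<Theta>: "(\<Theta> has_field_derivative (\<phi> s - \<phi>0 s)) (at s within R)" if "s \<in> R" for s
  proof -
    have "s \<in> Oset" using RO that by auto
    from DERIV_diff[OF d\<Psi>[OF this] dP0[of s]]
    show ?thesis unfolding \<Theta>_def by (rule has_field_derivative_at_within)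
  qed
  have \<Theta>b: "cmod (\<Theta> x - \<Theta> y) \<le> c2 \<beta> / 500 * cmod (x - y)" if "x \<in> R" "y \<in> R" for x y
    by (rule field_differentiable_bound[OF convR d\<Theta> errb that])
  have \<sigma>R: "complex_of_real \<sigma>0 \<in> R" unfolding R_def \<sigma>0_def c_def using pi_gt3 by auto
  have cR: "complex_of_real c \<in> R" unfolding R_def \<sigma>0_def c_def using pi_gt3 by auto
  have cballR: "cball (complex_of_real c) (1/2) \<subseteq> R"
  proof
    fix s assume "s \<in> cball (complex_of_real c) (1/2)"
    then have n: "cmod (s - complex_of_real c) \<le> 1/2" by (simp add: dist_norm norm_minus_commute)
    have "\<bar>Re s - c\<bar> \<le> 1/2" using abs_Re_le_cmod[of "s - complex_of_real c"] n by simp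
    moreover have "\<bar>Im s\<bar> \<le> 1/2" using abs_Im_le_cmod[of "s - complex_of_real c"] n by simp
    ultimately have "c - 1/2 \<le> Re s" "Re s \<le> c + 1/2" "-(1/2) \<le> Im s" "Im s \<le> 1/2"
      by (simp_all only: abs_le_iff) linarith+
    then show "s \<in> R" unfolding R_def \<sigma>0_def c_def using pi_gt3 by simp
  qed
  have P0per: "P0 (complex_of_real c) = P0 (complex_of_real \<sigma>0)"
  proof -
    have "\<i> * complex_of_real c = \<i> * complex_of_real \<sigma>0 + 2 * of_real pi * \<i>"
      by (simp add: \<sigma>0_def algebra_simps)
    then have "exp (\<i> * complex_of_real c) = exp (\<i> * complex_of_real \<sigma>0)" by (simp add: exp_add)
    then show ?thesis unfolding P0_def by simp
  qed
  define \<Phi> where "\<Phi> = (\<lambda>s. \<Psi> s - \<Psi> (complex_of_real \<sigma>0))"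
  have \<Phi>dec: "\<Phi> s = (\<Theta> s - \<Theta> (complex_of_real \<sigma>0)) + (P0 s - P0 (complex_of_real \<sigma>0))" for s
    unfolding \<Phi>_def \<Theta>_def by simp
  have \<Phi>c: "cmod (\<Phi> (complex_of_real c)) \<le> c2 \<beta> / 500 * (2*pi)"
  proof -
    have "\<Phi> (complex_of_real c) = \<Theta> (complex_of_real c) - \<Theta> (complex_of_real \<sigma>0)" using \<Phi>dec P0per by simp
    moreover have "cmod (complex_of_real c - complex_of_real \<sigma>0) = 2*pi"
      unfolding \<sigma>0_def by (simp del: of_real_diff add: of_real_diff[symmetric])
    ultimately show ?thesis using \<Theta>b[OF cR \<sigma>R] by simp
  qed
  have \<Phi>sph: "c2 \<beta> / 8 \<le> cmod (\<Phi> s)" if s: "s \<in> sphere (complex_of_real c) (1/2)" for s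
  proof -
    have ds: "cmod (s - complex_of_real c) = 1/2" using s by (simp add: dist_norm norm_minus_commute)
    have sR: "s \<in> R" using cballR s by auto
    have e: "exp (\<i> * complex_of_real c) * exp (\<i> * (s - complex_of_real c)) = exp (\<i> * s)"
      by (simp add: exp_add[symmetric] algebra_simps)
    have "P0 s - P0 (complex_of_real \<sigma>0) = P0 s - P0 (complex_of_real c)" using P0per by simp
    also have "\<dots> = of_real (c2 \<beta>) * (\<i> / mu) * exp (\<i> * complex_of_real c) * (exp (\<i> * (s - complex_of_real c)) - 1)"
      unfolding P0_def e[symmetric] by (simp add: field_simps)
    finally have Peq: "P0 s - P0 (complex_of_real \<sigma>0) = of_real (c2 \<beta>) * (\<i> / mu) * exp (\<i> * complex_of_real c) * (exp (\<i> * (s - complex_of_real c)) - 1)" .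
    have n1: "cmod (\<i> * (s - complex_of_real c)) = 1/2" using ds by (simp add: norm_mult)
    then have "1/2 * cmod (\<i> * (s - complex_of_real c)) \<le> cmod (exp (\<i> * (s - complex_of_real c)) - 1)"
      by (intro norm_exp_bounds(1)) simp
    then have lb: "1/4 \<le> cmod (exp (\<i> * (s - complex_of_real c)) - 1)" using n1 by simp
    have im: "cmod (\<i> / mu) = 1 / sqrt 2" by (simp add: norm_divide cmod_mu)
    have "2/3 \<le> 1 / sqrt (2::real)" using sqrt2_bounds by (simp add: field_simps)
    then have "c2 \<beta> * (2/3) * (1/4) \<le> c2 \<beta> * (1 / sqrt 2) * cmod (exp (\<i> * (s - complex_of_real c)) - 1)"
      using lb c2pos by (intro mult_mono) auto
    also have "\<dots> = cmod (P0 s - P0 (complex_of_real \<sigma>0))"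
      unfolding Peq norm_mult im using c2pos by simp
    finally have P: "c2 \<beta> / 6 \<le> cmod (P0 s - P0 (complex_of_real \<sigma>0))" by simp
    have "cmod (s - complex_of_real \<sigma>0) \<le> cmod (s - complex_of_real c) + cmod (complex_of_real c - complex_of_real \<sigma>0)"
      using norm_triangle_ineq[of "s - complex_of_real c" "complex_of_real c - complex_of_real \<sigma>0"] by simp
    also have "cmod (complex_of_real c - complex_of_real \<sigma>0) = 2*pi"
      unfolding \<sigma>0_def by (simp del: of_real_diff add: of_real_diff[symmetric])
    finally have "cmod (s - complex_of_real \<sigma>0) \<le> 9" using ds pi_less_4 by simp
    then have "c2 \<beta> / 500 * cmod (s - complex_of_real \<sigma>0) \<le> c2 \<beta> / 500 * 9"
      using c2pos by (intro mult_left_mono) auto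
    then have T: "cmod (\<Theta> s - \<Theta> (complex_of_real \<sigma>0)) \<le> c2 \<beta> / 500 * 9"
      using \<Theta>b[OF sR \<sigma>R] by linarith
    have "cmod (P0 s - P0 (complex_of_real \<sigma>0)) - cmod (\<Theta> s - \<Theta> (complex_of_real \<sigma>0)) \<le> cmod (\<Phi> s)"
      unfolding \<Phi>dec using norm_diff_ineq[of "P0 s - P0 (complex_of_real \<sigma>0)" "\<Theta> s - \<Theta> (complex_of_real \<sigma>0)"]
      by (simp add: add.commute)
    then show ?thesis using P T c2pos by linarith
  qed
  have d\<Phi>: "(\<Phi> has_field_derivative \<phi> s) (at s)" if "s \<in> Oset" for s
    unfolding \<Phi>_def using DERIV_diff[OF d\<Psi>[OF that] DERIV_const] by simp
  have \<Phi>holo: "\<Phi> holomorphic_on Oset"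
    using d\<Phi> by (auto simp: holomorphic_on_open[OF Oset_open])
  have cballO: "cball (complex_of_real c) (1/2) \<subseteq> Oset" using cballR RO by auto
  have "\<exists>s'\<in>cball (complex_of_real c) (1/2). \<Phi> s' = 0"
  proof (rule ccontr)
    assume no: "\<not> (\<exists>s'\<in>cball (complex_of_real c) (1/2). \<Phi> s' = 0)"
    have hb: "\<Phi> holomorphic_on ball (complex_of_real c) (1/2)"
      using holomorphic_on_subset[OF \<Phi>holo] cballO ball_subset_cball by blast
    have nzb: "\<And>z. z \<in> ball (complex_of_real c) (1/2) \<Longrightarrow> \<Phi> z \<noteq> 0"
      using no ball_subset_cball by blast
    have hi0: "(\<lambda>s. inverse (\<Phi> s)) holomorphic_on ball (complex_of_real c) (1/2)"
      by (rule holomorphic_on_inverse[OF hb nzb])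
    have ib: "interior (ball (complex_of_real c) (1/2)) = ball (complex_of_real c) (1/2)"
      by (rule interior_open) simp
    have hi: "(\<lambda>s. inverse (\<Phi> s)) holomorphic_on interior (ball (complex_of_real c) (1/2))"
      unfolding ib by (rule hi0)
    have cc: "continuous_on (cball (complex_of_real c) (1/2)) \<Phi>"
      using holomorphic_on_imp_continuous_on[OF holomorphic_on_subset[OF \<Phi>holo cballO]] .
    have cb: "closure (ball (complex_of_real c) (1/2)) = cball (complex_of_real c) (1/2)"
      by (rule closure_ball) simp
    have nzc: "\<forall>z\<in>cball (complex_of_real c) (1/2). \<Phi> z \<noteq> 0" using no by blast
    have ci: "continuous_on (closure (ball (complex_of_real c) (1/2))) (\<lambda>s. inverse (\<Phi> s))"
      unfolding cb by (rule continuous_on_inverse[OF cc nzc])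
    have "cmod (inverse (\<Phi> (complex_of_real c))) \<le> 8 / c2 \<beta>"
    proof (rule maximum_modulus_frontier[OF hi ci])
      show "bounded (ball (complex_of_real c) (1/2))" by (rule bounded_ball)
      show "complex_of_real c \<in> ball (complex_of_real c) (1/2)" by simp
      fix z assume "z \<in> frontier (ball (complex_of_real c) (1/2))"
      moreover have "frontier (ball (complex_of_real c) (1/2)) = sphere (complex_of_real c) (1/2)"
        by (rule frontier_ball) simp
      ultimately have z: "z \<in> sphere (complex_of_real c) (1/2)" by simp
      have lb: "c2 \<beta> / 8 \<le> cmod (\<Phi> z)" by (rule \<Phi>sph[OF z])
      have "1 / cmod (\<Phi> z) \<le> 1 / (c2 \<beta> / 8)"
      proof (rule divide_left_mono)
        have pz: "0 < cmod (\<Phi> z)" using lb c2pos by linarith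
        then show "0 < cmod (\<Phi> z) * (c2 \<beta> / 8)" using c2pos by simp
      qed (use lb in auto)
      moreover have "cmod (inverse (\<Phi> z)) = 1 / cmod (\<Phi> z)"
        by (simp add: norm_divide inverse_eq_divide)
      moreover have "1 / (c2 \<beta> / 8) = 8 / c2 \<beta>" by simp
      ultimately show "cmod (inverse (\<Phi> z)) \<le> 8 / c2 \<beta>" by simp
    qed
    moreover have "\<Phi> (complex_of_real c) \<noteq> 0" using no by simp
    ultimately have iv0: "cmod (inverse (\<Phi> (complex_of_real c))) \<le> 8 / c2 \<beta>"
      and pos: "0 < cmod (\<Phi> (complex_of_real c))" by simp_all
    have "cmod (inverse (\<Phi> (complex_of_real c))) = 1 / cmod (\<Phi> (complex_of_real c))"
      by (simp add: norm_divide inverse_eq_divide)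
    moreover have "8 / c2 \<beta> = 1 / (c2 \<beta> / 8)" by simp
    ultimately have iv: "1 / cmod (\<Phi> (complex_of_real c)) \<le> 1 / (c2 \<beta> / 8)" using iv0 by simp
    have "c2 \<beta> / 8 \<le> cmod (\<Phi> (complex_of_real c))"
    proof (rule ccontr)
      assume "\<not> c2 \<beta> / 8 \<le> cmod (\<Phi> (complex_of_real c))"
      then have lt: "cmod (\<Phi> (complex_of_real c)) < c2 \<beta> / 8" by simp
      have "1 / (c2 \<beta> / 8) < 1 / cmod (\<Phi> (complex_of_real c))"
      proof (rule divide_strict_left_mono[OF lt])
        show "0 < c2 \<beta> / 8 * cmod (\<Phi> (complex_of_real c))" using c2pos pos by simp
      qed simp
      then show False using iv by simp
    qed
    moreover have "c2 \<beta> / 500 * (2*pi) < c2 \<beta> / 8"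
    proof -
      have "c2 \<beta> * (pi / 250) < c2 \<beta> * (1/8)"
        using c2pos pi_less_4 by (intro mult_strict_left_mono) auto
      then show ?thesis by simp
    qed
    ultimately show False using \<Phi>c by linarith
  qed
  then obtain s' where s'c: "s' \<in> cball (complex_of_real c) (1/2)" and s'0: "\<Phi> s' = 0" by blast
  have \<sigma>O: "complex_of_real \<sigma>0 \<in> Oset" using \<sigma>R RO by auto
  have s'O: "s' \<in> Oset" using s'c cballO by auto
  have neq: "Wm (complex_of_real \<sigma>0) \<noteq> Wm s'"
  proof
    assume "Wm (complex_of_real \<sigma>0) = Wm s'"
    then have "exp (complex_of_real \<sigma>0) = exp s'" by (rule Wm_inj[OF \<sigma>O s'O])
    then have "cmod (exp (complex_of_real \<sigma>0)) = cmod (exp s')" by simp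
    then have "\<sigma>0 = Re s'" by (simp add: norm_exp_eq_Re)
    moreover have "\<bar>Re s' - c\<bar> \<le> 1/2"
      using s'c abs_Re_le_cmod[of "s' - complex_of_real c"] by (simp add: dist_norm norm_minus_commute)
    ultimately show False unfolding \<sigma>0_def using pi_gt3 by auto
  qed
  have w1: "Wm (complex_of_real \<sigma>0) \<in> ball 0 1" using Wm_ball[OF \<sigma>O] by simp
  have w2: "Wm s' \<in> ball 0 1" using Wm_ball[OF s'O] by simp
  have "G (Wm s') = G (Wm (complex_of_real \<sigma>0))" using s'0 unfolding \<Phi>_def \<Psi>_def by simp
  then have "cesaro_op \<beta> ff (Wm (complex_of_real \<sigma>0)) = cesaro_op \<beta> ff (Wm s')"
    using cesaro_G[OF G w1] cesaro_G[OF G w2] by simp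
  then have "\<not> inj_on (cesaro_op \<beta> ff) (ball 0 1)"
    using neq w1 w2 unfolding inj_on_def by blast
  then have "cesaro_op \<beta> ff \<notin> class_S" unfolding class_S_def by auto
  then show ?thesis using ff_S by blast
qed


end
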